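(* Let $d\ge 3$ and $h\ge 1$. The exponent of the sandpile group $G(d,h)$ equals $$(d-1)^h\cdot \operatorname{lcm}\{\,d\,\theta(d,h+1),\ \theta(d,h),\ \theta(d,h-1),\ \dots,\ \theta(d,2)\,\},$$ where $\theta(d,n) := \frac{(d-1)^n-1}{d-2}$.
   Context: Let $\mathcal{T}(d,h)$ be the rooted tree in which the root $0$ has $d$ children, every vertex at distance $1,\dots,h-1$ from the root has $d-1$ children, and the vertices at distance $h$ (leaves) have no children (the ball of radius $h$ in the infinite $d$-regular tree). Let $V$ be its vertex set, $A$ its adjacency matrix, $\Delta := dI-A$, and $\Lambda\subset\mathbb{Z}^V$ the lattice spanned by the rows of $\Delta$. Then $G(d,h) := \mathbb{Z}^V/\Lambda$. The exponent of a finite abelian group is the least common multiple of the orders of its elements (equivalently the largest order of an element). *)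

theory Defs
  imports Main
begin

text \<open>Vertices of T(d,h) are encoded as paths from the root: the root is the empty
list, the children of the root are [i] with i < d, and the children of a
non-root vertex xs (with length xs < h) are xs @ [j] with j < d - 1.\<close>

definition tree_verts :: "nat \<Rightarrow> nat \<Rightarrow> nat list set" where
  "tree_verts d h = {xs. length xs \<le> h \<and>
      (\<forall>i < length xs. xs ! i < (if i = 0 then d else d - 1))}"

definition tree_adj :: "nat \<Rightarrow> nat \<Rightarrow> nat list \<Rightarrow> nat list \<Rightarrow> bool" where
  "tree_adj d h u v \<longleftrightarrow> u \<in> tree_verts d h \<and> v \<in> tree_verts d h \<and>
      ((\<exists>j. v = u @ [j]) \<or> (\<exists>j. u = v @ [j]))"

definition tree_Delta :: "nat \<Rightarrow> nat \<Rightarrow> nat list \<Rightarrow> nat list \<Rightarrow> int" where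
  "tree_Delta d h u v = (if u = v then int d else 0) - (if tree_adj d h u v then 1 else 0)"

definition ZV :: "nat \<Rightarrow> nat \<Rightarrow> (nat list \<Rightarrow> int) set" where
  "ZV d h = {x. \<forall>v. v \<notin> tree_verts d h \<longrightarrow> x v = 0}"

definition Lambda :: "nat \<Rightarrow> nat \<Rightarrow> (nat list \<Rightarrow> int) set" where
  "Lambda d h = {x. \<exists>c :: nat list \<Rightarrow> int.
      \<forall>v. x v = (\<Sum>u\<in>tree_verts d h. c u * tree_Delta d h u v)}"

definition sp_order :: "nat \<Rightarrow> nat \<Rightarrow> (nat list \<Rightarrow> int) \<Rightarrow> nat" where
  "sp_order d h x = (LEAST n. n > 0 \<and> (\<lambda>v. int n * x v) \<in> Lambda d h)"

definition sp_exponent :: "nat \<Rightarrow> nat \<Rightarrow> nat" where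
  "sp_exponent d h = Lcm (sp_order d h ` ZV d h)"

text \<open>theta(d,n) = ((d-1)^n - 1)/(d-2); the division is exact for d \<ge> 3.\<close>
definition theta :: "nat \<Rightarrow> nat \<Rightarrow> nat" where
  "theta d n = ((d - 1) ^ n - 1) div (d - 2)"

end

theory Submission
  imports Defs Complex_Main
begin


fun thn :: "nat \<Rightarrow> nat \<Rightarrow> nat" where
  "thn q 0 = 0" | "thn q (Suc n) = q * thn q n + 1"

lemma thn_eq: "q \<ge> 1 \<Longrightarrow> (q - 1) * thn q n = q ^ n - 1"
proof (induction n)
  case 0 then show ?case by simp
next
  case (Suc n)
  have "q ^ n \<ge> 1" using Suc.prems by simp
  have "(q - 1) * thn q (Suc n) = q * ((q - 1) * thn q n) + (q - 1)"
    by (simp add: algebra_simps)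
  also have "\<dots> = q * (q ^ n - 1) + (q - 1)" using Suc by simp
  also have "\<dots> = q ^ Suc n - 1" using \<open>q ^ n \<ge> 1\<close> Suc.prems
    by (simp add: algebra_simps diff_mult_distrib2)
  finally show ?case .
qed

lemma theta_thn: "d \<ge> 3 \<Longrightarrow> theta d n = thn (d - 1) n"
proof -
  assume "d \<ge> 3"
  then have "(d - 1 - 1) * thn (d - 1) n = (d-1) ^ n - 1" by (intro thn_eq) auto
  moreover have "d - 2 = d - 1 - 1" by simp
  moreover have "d - 2 > 0" using \<open>d \<ge> 3\<close> by simp
  ultimately show ?thesis unfolding theta_def by (metis nonzero_mult_div_cancel_left less_irrefl)
qed

lemma thn_pos: "q \<ge> 1 \<Longrightarrow> n \<ge> 1 \<Longrightarrow> thn q n \<ge> 1"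
  by (cases n) auto

lemma coprime_mul_one: "coprime (a::nat) (k * a + 1)"
proof (rule coprimeI)
  fix c assume "c dvd a" "c dvd k * a + 1"
  then have "c dvd k * a" by simp
  with \<open>c dvd k * a + 1\<close> have "c dvd 1" using dvd_add_right_iff by blast
  then show "is_unit c" by simp
qed

lemma coprime_thn_Suc: "coprime (thn q n) (thn q (Suc n))"
  using coprime_mul_one[of "thn q n" q] by simp

lemma coprime_q_thn: "n \<ge> 1 \<Longrightarrow> coprime q (thn q n)"
proof (cases n)
  case (Suc m)
  have "coprime q (thn q m * q + 1)" by (rule coprime_mul_one)
  then show ?thesis using Suc by (simp add: mult.commute)
qed auto

lemma coprime_qpow_thn: "n \<ge> 1 \<Longrightarrow> coprime (q ^ k) (thn q n)"
  using coprime_q_thn by (simp add: coprime_power_left_iff)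

fun lcp :: "nat list \<Rightarrow> nat list \<Rightarrow> nat" where
  "lcp (x#xs) (y#ys) = (if x = y then Suc (lcp xs ys) else 0)"
| "lcp _ _ = 0"

lemma lcp_sym: "lcp v u = lcp u v"
  by (induction v u rule: lcp.induct) auto

lemma lcp_prefix: "lcp (w @ z) w = length w"
  by (induction w) auto

lemma lcp_self: "lcp v v = length v"
  using lcp_prefix[of v "[]"] by simp

lemma lcp_snoc: "lcp v (w @ [j]) = (if (\<exists>z. v = w @ z) then
   (if length w < length v \<and> v ! length w = j then Suc (length w) else length w) else lcp v w)"
proof (induction w arbitrary: v)
  case Nil then show ?case by (cases v) auto
next
  case (Cons a w) then show ?case by (cases v) auto
qed

lemma pre_snoc: "(\<exists>z. v = (w @ [j]) @ z) \<longleftrightarrow> (\<exists>z. v = w @ z) \<and> length w < length v \<and> v ! length w = j"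
proof
  assume "\<exists>z. v = (w @ [j]) @ z" then show "(\<exists>z. v = w @ z) \<and> length w < length v \<and> v ! length w = j"
    by auto
next
  assume "(\<exists>z. v = w @ z) \<and> length w < length v \<and> v ! length w = j"
  then obtain z where z: "v = w @ z" "length w < length v" "v ! length w = j" by auto
  then obtain z' where "z = j # z'" by (cases z) auto
  then show "\<exists>z. v = (w @ [j]) @ z" using z by auto
qed



locale trd = fixes d h :: nat assumes d3: "3 \<le> d"
begin

definition cw :: "nat list \<Rightarrow> nat" where "cw w = (if w = [] then d else d - 1)"

lemma snoc_in_V: "w @ [j] \<in> tree_verts d h \<longleftrightarrow> w \<in> tree_verts d h \<and> length w < h \<and> j < cw w"
proof
  assume a: "w @ [j] \<in> tree_verts d h"
  then have "length w < h" unfolding tree_verts_def by auto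
  moreover have "\<forall>i<length w. w ! i < (if i = 0 then d else d - 1)"
  proof (intro allI impI)
    fix i assume "i < length w"
    then show "w ! i < (if i = 0 then d else d - 1)"
      using a unfolding tree_verts_def by (auto simp: nth_append dest!: spec[of _ i])
  qed
  moreover have "j < cw w"
    using a unfolding tree_verts_def cw_def by (auto dest!: spec[of _ "length w"])
  ultimately show "w \<in> tree_verts d h \<and> length w < h \<and> j < cw w"
    unfolding tree_verts_def by auto
next
  assume "w \<in> tree_verts d h \<and> length w < h \<and> j < cw w"
  then show "w @ [j] \<in> tree_verts d h"
    unfolding tree_verts_def cw_def by (auto simp: nth_append less_Suc_eq)
qed

lemma butlast_in_V: "w \<in> tree_verts d h \<Longrightarrow> butlast w \<in> tree_verts d h"
proof (cases w rule: rev_cases)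
  case (snoc ys y)
  assume "w \<in> tree_verts d h" then show ?thesis using snoc snoc_in_V by auto
qed auto

lemma finite_V: "finite (tree_verts d h)"
proof -
  have "tree_verts d h \<subseteq> {xs. set xs \<subseteq> {..<d} \<and> length xs \<le> h}"
  proof
    fix xs assume "xs \<in> tree_verts d h"
    then have "length xs \<le> h" "\<forall>i<length xs. xs ! i < (if i = 0 then d else d - 1)"
      unfolding tree_verts_def by auto
    moreover have "\<forall>i<length xs. xs ! i < d"
    proof (intro allI impI)
      fix i assume "i < length xs"
      with \<open>\<forall>i<length xs. xs ! i < (if i = 0 then d else d - 1)\<close>
      have "xs ! i < (if i = 0 then d else d - 1)" by blast
      then show "xs ! i < d" by (auto split: if_splits)
    qed
    ultimately show "xs \<in> {xs. set xs \<subseteq> {..<d} \<and> length xs \<le> h}"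
      by (auto simp: in_set_conv_nth)
  qed
  moreover have "finite {xs. set xs \<subseteq> {..<d} \<and> length xs \<le> (h::nat)}"
    by (rule finite_lists_length_le) simp
  ultimately show ?thesis by (rule finite_subset)
qed

lemma nil_in_V: "[] \<in> tree_verts d h" unfolding tree_verts_def by simp

lemma adj_set: assumes w: "w \<in> tree_verts d h"
  shows "{u \<in> tree_verts d h. tree_adj d h u w} =
    (if w = [] then {} else {butlast w}) \<union> (if length w < h then (\<lambda>j. w @ [j]) ` {..<cw w} else {})"
proof (intro set_eqI iffI)
  fix u assume "u \<in> {u \<in> tree_verts d h. tree_adj d h u w}"
  then have u: "u \<in> tree_verts d h" "(\<exists>j. w = u @ [j]) \<or> (\<exists>j. u = w @ [j])"
    unfolding tree_adj_def by auto
  from u(2) show "u \<in> (if w = [] then {} else {butlast w}) \<union> (if length w < h then (\<lambda>j. w @ [j]) ` {..<cw w} else {})"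
  proof
    assume "\<exists>j. w = u @ [j]" then show ?thesis by auto
  next
    assume "\<exists>j. u = w @ [j]"
    then obtain j where j: "u = w @ [j]" by auto
    then have "length w < h" "j < cw w" using u(1) snoc_in_V by auto
    then show ?thesis using j by auto
  qed
next
  fix u assume "u \<in> (if w = [] then {} else {butlast w}) \<union> (if length w < h then (\<lambda>j. w @ [j]) ` {..<cw w} else {})"
  then consider "w \<noteq> []" "u = butlast w" | j where "length w < h" "j < cw w" "u = w @ [j]"
    by (auto split: if_splits)
  then show "u \<in> {u \<in> tree_verts d h. tree_adj d h u w}"
  proof cases
    case 1
    then have "w = u @ [last w]" by simp
    then show ?thesis using 1 w butlast_in_V unfolding tree_adj_def by blast
  next
    case 2
    then have "u \<in> tree_verts d h" using w snoc_in_V by auto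
    then show ?thesis using 2 w unfolding tree_adj_def by blast
  qed
qed

lemma nbr_sum: assumes w: "w \<in> tree_verts d h"
  shows "(\<Sum>u\<in>tree_verts d h. f u * of_int (tree_Delta d h u w)) =
    of_nat d * f w - (if w = [] then 0 else f (butlast w))
      - (if length w < h then (\<Sum>j<cw w. f (w @ [j])) else (0::rat))"
proof -
  let ?V = "tree_verts d h"
  have adj_irr: "\<not> tree_adj d h w w" unfolding tree_adj_def by auto
  have "(\<Sum>u\<in>?V. f u * of_int (tree_Delta d h u w)) =
      (\<Sum>u\<in>?V. of_nat d * (if u = w then f u else 0)) - (\<Sum>u\<in>?V. (if tree_adj d h u w then f u else 0))"
    unfolding tree_Delta_def sum_subtractf[symmetric]
    by (rule sum.cong) (auto simp: adj_irr)
  also have "(\<Sum>u\<in>?V. of_nat d * (if u = w then f u else 0)) = of_nat d * f w"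
    using w finite_V by (simp add: sum_distrib_left[symmetric])
  also have "(\<Sum>u\<in>?V. (if tree_adj d h u w then f u else 0)) = (\<Sum>u\<in>{u \<in> ?V. tree_adj d h u w}. f u)"
    using finite_V by (simp add: sum.inter_filter)
  also have "\<dots> = (\<Sum>u\<in>(if w = [] then {} else {butlast w}). f u) +
       (\<Sum>u\<in>(if length w < h then (\<lambda>j. w @ [j]) ` {..<cw w} else {}). f u)"
    unfolding adj_set[OF w] by (rule sum.union_disjoint) (auto dest: arg_cong[of _ _ length])
  also have "(\<Sum>u\<in>(if length w < h then (\<lambda>j. w @ [j]) ` {..<cw w} else {}). f u) =
     (if length w < h then (\<Sum>j<cw w. f (w @ [j])) else 0)"
    by (simp add: sum.reindex inj_on_def)
  finally show ?thesis by simp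
qed

lemma nbr_sum_out: assumes w: "w \<notin> tree_verts d h"
  shows "(\<Sum>u\<in>tree_verts d h. f u * of_int (tree_Delta d h u w)) = (0::rat)"
  by (rule sum.neutral) (use w in \<open>auto simp: tree_Delta_def tree_adj_def\<close>)

lemma Delta_sym: "tree_Delta d h u w = tree_Delta d h w u"
  unfolding tree_Delta_def tree_adj_def by auto

end


lemma alg_b: fixes Q Tl Tn Tp Tm r :: rat
  assumes "Tl = Q*Tn + 1" "Tp = Q*Tl + 1"
  shows "(Q+1)*(Tm*Tl*r) - Tm*Tp*r - Tm*Tn*(Q*r) = 0"
  using assms by (simp add: algebra_simps)

lemma alg_a1_0: fixes D P T0 T1 r0 :: rat
  assumes "T0 - T1 = P" "r0 = 1/(D*P*T0)" "T0 \<noteq> 0" "D \<noteq> 0" "P \<noteq> 0"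
  shows "D*(T0*T0*r0) - T0*T1*(D*r0) = 1"
proof -
  have "D*(T0*T0*r0) - T0*T1*(D*r0) = T0 * (D * r0 * (T0 - T1))" by (simp add: algebra_simps)
  also have "D * r0 * (T0 - T1) = 1 / T0" using assms by simp
  finally show ?thesis using assms by simp
qed

lemma alg_a1_s: fixes Q Tp Tm Tn rm rp :: rat
  assumes "rm = rp + 1/(Tp*Tm)" "Tp = Q*Tm+1" "Tm = Q*Tn + 1" "Tp \<noteq> 0" "Tm \<noteq> 0"
  shows "(Q+1)*(Tm*Tm*rm) - Tm*Tp*rp - Tm*Tn*(Q*rm) = 1"
proof -
  have rp: "rp = rm - 1/(Tp*Tm)" using assms by simp
  have "(Q+1)*(Tm*Tm*rm) - Tm*Tp*rp - Tm*Tn*(Q*rm) = rm*Tm*((Q+1)*Tm - Tp - Q*Tn) + Tm*Tp/(Tp*Tm)"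
    unfolding rp by (simp add: algebra_simps)
  also have "(Q+1)*Tm - Tp - Q*Tn = 0" using assms(2,3) by (simp add: algebra_simps)
  also have "Tm*Tp/(Tp*Tm) = 1" using assms by simp
  finally show ?thesis by simp
qed

lemma alg_a2_0: fixes D Q P T0 T1 Tm r0 r1 :: rat
  assumes "D = Q + 1" "T0 - T1 = P" "r0 = 1/(D*P*T0)" "r1 = r0 + 1/(T0*T1)"
    "T0 \<noteq> 0" "T1 \<noteq> 0" "D \<noteq> 0" "P \<noteq> 0"
  shows "D*(Tm*T0*r0) - Tm*T1*(r1 + (D-1)*r0) = 0"
proof -
  have "D*(Tm*T0*r0) - Tm*T1*(r1 + (D-1)*r0) = Tm * (D*r0*(T0 - T1) - T1/(T0*T1))"
    using assms(1,4) by (simp add: algebra_simps)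
  also have "D*r0*(T0 - T1) = 1/T0" using assms by simp
  also have "T1/(T0*T1) = 1/T0" using assms by simp
  finally show ?thesis by simp
qed

lemma alg_a2_s: fixes Q Tp Tl Tn Tm rp rl rs :: rat
  assumes "rl = rp + 1/(Tp*Tl)" "rs = rl + 1/(Tl*Tn)" "Tp = Q*Tl+1" "Tl = Q*Tn + 1"
    "Tp \<noteq> 0" "Tl \<noteq> 0" "Tn \<noteq> 0"
  shows "(Q+1)*(Tm*Tl*rl) - Tm*Tp*rp - Tm*Tn*(rs + (Q-1)*rl) = 0"
proof -
  have rp: "rp = rl - 1/(Tp*Tl)" using assms by simp
  have "(Q+1)*(Tm*Tl*rl) - Tm*Tp*rp - Tm*Tn*(rs + (Q-1)*rl)
     = Tm*(rl*((Q+1)*Tl - Tp - Q*Tn) + Tp/(Tp*Tl) - Tn/(Tl*Tn))"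
    unfolding rp assms(2) by (simp add: algebra_simps)
  also have "(Q+1)*Tl - Tp - Q*Tn = 0" using assms(3,4) by (simp add: algebra_simps)
  also have "Tp/(Tp*Tl) = 1/Tl" using assms by simp
  also have "Tn/(Tl*Tn) = 1/Tl" using assms by simp
  finally show ?thesis by simp
qed

lemma sum_if_one: fixes A B :: rat assumes "j0 < c"
  shows "(\<Sum>j<c. if j = j0 then A else B) = A + (of_nat c - 1) * B"
proof -
  have "(\<Sum>j<c. if j = j0 then A else B) = (\<Sum>j<c. B + (if j = j0 then A - B else 0))"
    by (rule sum.cong) auto
  also have "\<dots> = of_nat c * B + (A - B)" using assms by (simp add: sum.distrib)
  finally show ?thesis by (simp add: algebra_simps)
qed

context trd begin

definition Th :: "nat \<Rightarrow> rat" where "Th a = of_nat (thn (d - 1) a)"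
definition T :: "nat \<Rightarrow> rat" where "T l = Th (h + 1 - l)"

fun rho :: "nat \<Rightarrow> rat" where
  "rho 0 = 1 / (of_nat d * of_nat (d - 1) ^ h * T 0)"
| "rho (Suc k) = rho k + 1 / (T k * T (Suc k))"

definition G :: "nat list \<Rightarrow> nat list \<Rightarrow> rat" where
  "G v u = T (length v) * T (length u) * rho (lcp v u)"

lemma G_sym: "G v u = G u v" unfolding G_def by (simp add: lcp_sym)

lemma Th_Suc: "Th (Suc a) = of_nat (d - 1) * Th a + 1" unfolding Th_def by (simp add: of_nat_mult)

lemma Th_pos: "a \<ge> 1 \<Longrightarrow> Th a > 0"
proof -
  assume "a \<ge> 1"
  then have "thn (d - 1) a \<ge> 1" using thn_pos[of "d - 1" a] d3 by simp
  then show ?thesis unfolding Th_def by simp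
qed

lemma Th_diff: "Th (Suc a) - Th a = of_nat (d - 1) ^ a"
proof (induction a)
  case 0 then show ?case by (simp add: Th_def)
next
  case (Suc a)
  have "Th (Suc (Suc a)) - Th (Suc a) = of_nat (d - 1) * (Th (Suc a) - Th a)"
    by (simp only: Th_Suc) (simp add: algebra_simps)
  then show ?case using Suc by simp
qed

lemma T_pos: "l \<le> h \<Longrightarrow> T l > 0" unfolding T_def by (intro Th_pos) simp

lemma T_h1: "T (Suc h) = 0" unfolding T_def Th_def by simp

lemma T_rec: "l \<le> h \<Longrightarrow> T l = of_nat (d - 1) * T (Suc l) + 1"
proof -
  assume "l \<le> h"
  then have "h + 1 - l = Suc (h + 1 - Suc l)" by simp
  then show ?thesis unfolding T_def using Th_Suc by simp
qed

lemma T01: "T 0 - T 1 = of_nat (d - 1) ^ h"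
  unfolding T_def using Th_diff[of h] by simp

lemma d_eq: "(of_nat d :: rat) = of_nat (d - 1) + 1" using d3 by (simp add: of_nat_diff)

lemma take_in_V: "v \<in> tree_verts d h \<Longrightarrow> take n v \<in> tree_verts d h"
  unfolding tree_verts_def by auto

lemma len_V: "v \<in> tree_verts d h \<Longrightarrow> length v \<le> h" unfolding tree_verts_def by auto

lemma children_sum: assumes "w \<in> tree_verts d h"
  shows "(if length w < h then (\<Sum>j<cw w. G v (w @ [j])) else 0) =
     T (length v) * T (Suc (length w)) * (\<Sum>j<cw w. rho (lcp v (w @ [j])))"
proof (cases "length w < h")
  case True then show ?thesis unfolding G_def by (simp add: sum_distrib_left)
next
  case False
  then have "length w = h" using len_V[OF assms] by simp
  then show ?thesis using False by (simp add: T_h1)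
qed

end


context trd begin

lemma lcp_pre: "\<exists>z. v = w @ z \<Longrightarrow> lcp v w = length w"
  using lcp_prefix lcp_sym by auto

lemma green_local: assumes v: "v \<in> tree_verts d h" and w: "w \<in> tree_verts d h"
  shows "of_nat d * G v w - (if w = [] then 0 else G v (butlast w))
     - (if length w < h then (\<Sum>j<cw w. G v (w @ [j])) else 0) = (if v = w then 1 else 0)"
proof -
  let ?Q = "of_nat (d - 1) :: rat"
  let ?m = "length v" and ?l = "length w"
  have lv: "?m \<le> h" using len_V[OF v] .
  have lw: "?l \<le> h" using len_V[OF w] .
  have Dne: "(of_nat d :: rat) \<noteq> 0" using d3 by simp
  have Pne: "?Q ^ h \<noteq> 0" using d3 by simp
  note cs = children_sum[OF w, of v]
  show ?thesis
  proof (cases "\<exists>z. v = w @ z")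
    case False
    then have wne: "w \<noteq> []" by auto
    then obtain w' j0 where ww: "w = w' @ [j0]" by (cases w rule: rev_cases) auto
    define k where "k = lcp v w"
    have hk: "lcp v w' = k"
    proof (cases "\<exists>z. v = w' @ z")
      case True
      then have "lcp v w = length w'" using False lcp_snoc[of v w' j0] pre_snoc[of v w' j0] ww by auto
      then show ?thesis using lcp_pre[OF True] k_def by simp
    next
      case False2: False
      then show ?thesis using lcp_snoc[of v w' j0] ww k_def by simp
    qed
    have ch: "\<And>j. lcp v (w @ [j]) = k" using lcp_snoc[of v w] False k_def by simp
    have cwq: "cw w = d - 1" using wne cw_def by simp
    have "(\<Sum>j<cw w. rho (lcp v (w @ [j]))) = ?Q * rho k" using ch cwq by simp
    then have c2: "(if ?l < h then (\<Sum>j<cw w. G v (w @ [j])) else 0) = T ?m * T (Suc ?l) * (?Q * rho k)"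
      using cs by simp
    have vw: "v \<noteq> w" using False by auto
    have r1: "T ?l = ?Q * T (Suc ?l) + 1" using T_rec lw by simp
    have r2: "T (length w') = ?Q * T ?l + 1" using T_rec[of "length w'"] lw ww by simp
    have "of_nat d * G v w - G v w' - T ?m * T (Suc ?l) * (?Q * rho k) = 0"
      unfolding G_def k_def[symmetric] hk d_eq using alg_b[OF r1 r2] ww by simp
    then show ?thesis using c2 vw wne ww by simp
  next
    case True
    then obtain z where vz: "v = w @ z" by auto
    have lvw: "lcp v w = ?l" using lcp_pre[OF True] .
    show ?thesis
    proof (cases "z = []")
      case True
      then have vw: "v = w" using vz by simp
      have ch: "\<And>j. lcp v (w @ [j]) = ?l" using lcp_snoc[of v w] vw by simp
      have c2: "(if ?l < h then (\<Sum>j<cw w. G v (w @ [j])) else 0) = T ?l * T (Suc ?l) * (of_nat (cw w) * rho ?l)"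
        using cs ch vw by simp
      show ?thesis
      proof (cases "w = []")
        case True
        have e: "T 0 - T 1 = ?Q ^ h" by (rule T01)
        have T0: "T 0 \<noteq> 0" using T_pos[of 0] by simp
        have "of_nat d * (T 0 * T 0 * rho 0) - T 0 * T 1 * (of_nat d * rho 0) = 1"
          by (rule alg_a1_0[OF e _ T0 Dne Pne]) simp
        then show ?thesis using c2 vw True by (simp add: G_def lcp_self cw_def)
      next
        case False
        then obtain w' j0 where ww: "w = w' @ [j0]" by (cases w rule: rev_cases) auto
        have hk: "lcp v w' = length w'" using lcp_pre vw ww by simp
        have r1: "T ?l = ?Q * T (Suc ?l) + 1" using T_rec lw by simp
        have r2: "T (length w') = ?Q * T ?l + 1" using T_rec[of "length w'"] lw ww by simp
        have rr: "rho ?l = rho (length w') + 1 / (T (length w') * T ?l)" using ww by simp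
        have p1: "T (length w') \<noteq> 0" using T_pos[of "length w'"] lw ww by simp
        have p2: "T ?l \<noteq> 0" using T_pos[OF lw] by simp
        have "(?Q+1)*(T ?l*T ?l*rho ?l) - T ?l*T (length w')*rho (length w') - T ?l*T (Suc ?l)*(?Q*rho ?l) = 1"
          by (rule alg_a1_s[OF rr r2 r1 p1 p2])
        then show ?thesis using c2 vw False ww hk
          by (simp add: G_def lcp_self cw_def d_eq)
      qed
    next
      case False
      then obtain a z' where za: "z = a # z'" by (cases z) auto
      have lt: "?l < ?m" using vz za by simp
      have va: "v ! ?l = a" using vz za by simp
      have "take (Suc ?l) v = w @ [a]" using vz za by simp
      then have "w @ [a] \<in> tree_verts d h" using take_in_V[OF v, of "Suc ?l"] by simp
      then have acw: "a < cw w" using snoc_in_V by simp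
      have ch: "\<And>j. lcp v (w @ [j]) = (if j = a then Suc ?l else ?l)"
        using lcp_snoc[of v w] True lt va by auto
      have "(\<Sum>j<cw w. rho (lcp v (w @ [j]))) = rho (Suc ?l) + (of_nat (cw w) - 1) * rho ?l"
        unfolding ch if_distrib[of rho] by (rule sum_if_one[OF acw])
      then have c2: "(if ?l < h then (\<Sum>j<cw w. G v (w @ [j])) else 0) =
          T ?m * T (Suc ?l) * (rho (Suc ?l) + (of_nat (cw w) - 1) * rho ?l)"
        using cs by simp
      have vw: "v \<noteq> w" using vz za by simp
      have p2: "T ?l \<noteq> 0" using T_pos[OF lw] by simp
      have p3: "T (Suc ?l) \<noteq> 0" using T_pos[of "Suc ?l"] lt lv by simp
      show ?thesis
      proof (cases "w = []")
        case True
        have e: "T 0 - T 1 = ?Q ^ h" by (rule T01)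
        have T0: "T 0 \<noteq> 0" using T_pos[of 0] by simp
        have T1: "T 1 \<noteq> 0" using p3 True by simp
        have "of_nat d*(T ?m*T 0*rho 0) - T ?m*T 1*(rho 1 + (of_nat d-1)*rho 0) = 0"
          by (rule alg_a2_0[OF d_eq e _ _ T0 T1 Dne Pne]) simp_all
        then show ?thesis using c2 vw True by (simp add: G_def lvw cw_def)
      next
        case False
        then obtain w' j0 where ww: "w = w' @ [j0]" by (cases w rule: rev_cases) auto
        have hk: "lcp v w' = length w'" using lcp_pre vz ww by simp
        have r1: "T ?l = ?Q * T (Suc ?l) + 1" using T_rec lw by simp
        have r2: "T (length w') = ?Q * T ?l + 1" using T_rec[of "length w'"] lw ww by simp
        have rr: "rho ?l = rho (length w') + 1 / (T (length w') * T ?l)" using ww by simp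
        have rs: "rho (Suc ?l) = rho ?l + 1 / (T ?l * T (Suc ?l))" by simp
        have p1: "T (length w') \<noteq> 0" using T_pos[of "length w'"] lw ww by simp
        have "(?Q+1)*(T ?m*T ?l*rho ?l) - T ?m*T (length w')*rho (length w')
           - T ?m*T (Suc ?l)*(rho (Suc ?l) + (?Q-1)*rho ?l) = 0"
          by (rule alg_a2_s[OF rr rs r2 r1 p1 p2 p3])
        then show ?thesis using c2 vw False ww hk lvw
          by (simp add: G_def lvw cw_def d_eq)
      qed
    qed
  qed
qed

end


lemma int_of_dvd: assumes "(m::nat) dvd n" "m > 0"
  shows "(of_nat n :: rat) * (1 / of_nat m) \<in> \<int>"
proof -
  obtain t where "n = m * t" using assms by auto
  then have "(of_nat n :: rat) * (1 / of_nat m) = of_nat t" using assms by simp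
  then show ?thesis by simp
qed

lemma dvd_of_int: assumes "(of_nat n :: rat) * (1 / of_nat m) \<in> \<int>" "m > 0"
  shows "(m::nat) dvd n"
proof -
  obtain z where z: "(of_nat n :: rat) * (1 / of_nat m) = of_int z" using assms(1) Ints_cases by metis
  then have "(of_nat n :: rat) = of_nat m * of_int z" using assms(2) by (simp add: field_simps)
  then have "(of_int (int n) :: rat) = of_int (int m * z)" by simp
  then have "int n = int m * z" by (simp only: of_int_eq_iff)
  then have "int m dvd int n" by simp
  then show ?thesis by simp
qed

context trd begin

definition Sset :: "nat set" where "Sset = {d * theta d (h + 1)} \<union> theta d ` {2..h}"
definition NN :: nat where "NN = (d - 1) ^ h * Lcm Sset"

lemma T_nat: "T k = of_nat (thn (d - 1) (h + 1 - k))" unfolding T_def Th_def ..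

lemma theta_eq: "theta d n = thn (d - 1) n" using theta_thn d3 by simp

lemma thn_dvd_Lcm: assumes "1 \<le> a" "a \<le> h + 1" shows "thn (d - 1) a dvd Lcm Sset"
proof -
  consider "a = 1" | "a = h + 1" | "2 \<le> a" "a \<le> h" using assms by linarith
  then show ?thesis
  proof cases
    case 1 then show ?thesis by simp
  next
    case 2
    then have "d * thn (d - 1) a \<in> Sset" unfolding Sset_def theta_eq by simp
    then have "d * thn (d - 1) a dvd Lcm Sset" by (rule dvd_Lcm)
    then show ?thesis using dvd_mult_right by blast
  next
    case 3
    then have "thn (d - 1) a \<in> Sset" unfolding Sset_def theta_eq by auto
    then show ?thesis by (rule dvd_Lcm)
  qed
qed

lemma rho_int: "k \<le> h \<Longrightarrow> of_nat NN * rho k \<in> \<int>"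
proof (induction k)
  case 0
  have "d * thn (d - 1) (h + 1) \<in> Sset" unfolding Sset_def theta_eq by simp
  then have "d * thn (d - 1) (h + 1) dvd Lcm Sset" by (rule dvd_Lcm)
  then have dv: "d * (d - 1) ^ h * thn (d - 1) (h + 1) dvd NN" unfolding NN_def
    by (metis mult.assoc mult.commute mult_dvd_mono dvd_refl)
  have pos: "d * (d - 1) ^ h * thn (d - 1) (h + 1) > 0" using d3 thn_pos[of "d - 1" "h + 1"] by simp
  have "rho 0 = 1 / of_nat (d * (d - 1) ^ h * thn (d - 1) (h + 1))"
    by (simp add: T_nat del: thn.simps)
  then show ?case using int_of_dvd[OF dv pos] by simp
next
  case (Suc k)
  define a where "a = h - Suc k"
  have a1: "1 \<le> a + 1" "a + 1 \<le> h" using Suc.prems a_def by auto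
  have ha: "h + 1 - k = Suc (a + 1)" "h + 1 - Suc k = a + 1" using Suc.prems a_def by auto
  have c: "coprime (thn (d - 1) (Suc (a + 1))) (thn (d - 1) (a + 1))"
    using coprime_thn_Suc coprime_commute by blast
  have "thn (d - 1) (Suc (a + 1)) * thn (d - 1) (a + 1) dvd Lcm Sset"
    by (rule divides_mult[OF thn_dvd_Lcm thn_dvd_Lcm c]) (use a1 in auto)
  then have dv: "thn (d - 1) (Suc (a + 1)) * thn (d - 1) (a + 1) dvd NN" unfolding NN_def by simp
  have pos: "thn (d - 1) (Suc (a + 1)) * thn (d - 1) (a + 1) > 0"
    using thn_pos[of "d - 1" "a + 1"] thn_pos[of "d - 1" "Suc (a + 1)"] d3 by simp
  have tk: "T k = of_nat (thn (d - 1) (Suc (a + 1)))" using ha by (simp only: T_nat)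
  have tks: "T (Suc k) = of_nat (thn (d - 1) (a + 1))" using ha by (simp only: T_nat)
  have "of_nat NN * rho (Suc k) = of_nat NN * rho k +
     of_nat NN * (1 / of_nat (thn (d - 1) (Suc (a + 1)) * thn (d - 1) (a + 1)))"
    by (simp only: rho.simps tk tks of_nat_mult distrib_left)
  then show ?case using Suc int_of_dvd[OF dv pos] by simp
qed

lemma NN_dvd: assumes "\<And>k. k \<le> h \<Longrightarrow> of_nat n * rho k \<in> \<int>" shows "NN dvd n"
proof -
  let ?q = "d - 1"
  have pos0: "d * ?q ^ h * thn ?q (h + 1) > 0" using d3 thn_pos[of "?q" "h + 1"] by simp
  have "rho 0 = 1 / of_nat (d * ?q ^ h * thn ?q (h + 1))" by (simp add: T_nat del: thn.simps)
  then have d0: "d * ?q ^ h * thn ?q (h + 1) dvd n" using assms[of 0] dvd_of_int[OF _ pos0] by simp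
  have dA: "thn ?q a dvd n" if a: "1 \<le> a" "a \<le> h" for a
  proof -
    define k where "k = h - a"
    have ha: "h + 1 - k = Suc a" "h + 1 - Suc k = a" "Suc k \<le> h" "k \<le> h" using a k_def by auto
    have q1: "?q \<ge> 1" using d3 by simp
    have pos: "thn ?q (Suc a) * thn ?q a > 0" using thn_pos[OF q1, of a] thn_pos[OF q1, of "Suc a"] a by simp
    have tk: "T k = of_nat (thn ?q (Suc a))" using ha by (simp only: T_nat)
    have tks: "T (Suc k) = of_nat (thn ?q a)" using ha by (simp only: T_nat)
    have "of_nat n * rho (Suc k) - of_nat n * rho k = of_nat n * (1 / of_nat (thn ?q (Suc a) * thn ?q a))"
      by (simp only: rho.simps tk tks of_nat_mult distrib_left)
    moreover have "of_nat n * rho (Suc k) - of_nat n * rho k \<in> \<int>"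
      using assms[OF ha(3)] assms[OF ha(4)] by (rule Ints_diff)
    ultimately have "thn ?q (Suc a) * thn ?q a dvd n" using dvd_of_int[OF _ pos] by simp
    then show ?thesis using dvd_mult_right by blast
  qed
  have "?q ^ h dvd n" using d0 by (metis dvd_mult_left dvd_mult_right)
  then obtain n' where n': "n = ?q ^ h * n'" by auto
  have qpos: "?q ^ h > 0" using d3 by simp
  have "Lcm Sset dvd n'"
  proof (rule Lcm_least)
    fix e assume "e \<in> Sset"
    then consider "e = d * thn ?q (h + 1)" | a where "a \<in> {2..h}" "e = thn ?q a"
      unfolding Sset_def theta_eq by auto
    then show "e dvd n'"
    proof cases
      case 1
      have "?q ^ h * e dvd ?q ^ h * n'" using d0 n' 1 by (simp add: ac_simps del: thn.simps)
      then show ?thesis using qpos d3 by (simp del: thn.simps)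
    next
      case 2
      have "coprime e (?q ^ h)" using coprime_qpow_thn[of a ?q h] 2 coprime_commute by auto
      moreover have "e dvd ?q ^ h * n'" using dA[of a] 2 n' by auto
      ultimately show ?thesis by (simp add: coprime_dvd_mult_right_iff)
    qed
  qed
  then show ?thesis unfolding NN_def n' by simp
qed

end


lemma lcp_le: "lcp v u \<le> length v"
  by (induction v u rule: lcp.induct) auto

lemma lcp_rep: "lcp (replicate k 0 @ xs) (replicate k 0 @ ys) = k + lcp xs ys"
  by (induction k) auto

lemma Lam_mult: "y \<in> Lambda d h \<Longrightarrow> (\<lambda>v. k * y v) \<in> Lambda d h"
proof -
  assume "y \<in> Lambda d h"
  then obtain c where c: "\<forall>v. y v = (\<Sum>u\<in>tree_verts d h. c u * tree_Delta d h u v)"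
    unfolding Lambda_def by auto
  have "\<forall>v. k * y v = (\<Sum>u\<in>tree_verts d h. (k * c u) * tree_Delta d h u v)"
    using c by (simp add: sum_distrib_left mult.assoc)
  then have "\<exists>c'. \<forall>v. k * y v = (\<Sum>u\<in>tree_verts d h. c' u * tree_Delta d h u v)"
    by (intro exI[of _ "\<lambda>u. k * c u"]) simp
  then show ?thesis unfolding Lambda_def by simp
qed

lemma Lam_diff: "y \<in> Lambda d h \<Longrightarrow> z \<in> Lambda d h \<Longrightarrow> (\<lambda>v. y v - z v) \<in> Lambda d h"
proof -
  assume "y \<in> Lambda d h" "z \<in> Lambda d h"
  then obtain c c' where c: "\<forall>v. y v = (\<Sum>u\<in>tree_verts d h. c u * tree_Delta d h u v)"
    and c': "\<forall>v. z v = (\<Sum>u\<in>tree_verts d h. c' u * tree_Delta d h u v)"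
    unfolding Lambda_def by auto
  have "\<forall>v. y v - z v = (\<Sum>u\<in>tree_verts d h. (c u - c' u) * tree_Delta d h u v)"
    using c c' by (simp add: sum_subtractf left_diff_distrib)
  then have "\<exists>c''. \<forall>v. y v - z v = (\<Sum>u\<in>tree_verts d h. c'' u * tree_Delta d h u v)"
    by (intro exI[of _ "\<lambda>u. c u - c' u"]) simp
  then show ?thesis unfolding Lambda_def by simp
qed

lemma order_props: assumes "N > 0" "(\<lambda>v. int N * x v) \<in> Lambda d h"
  shows "sp_order d h x > 0" "(\<lambda>v. int (sp_order d h x) * x v) \<in> Lambda d h"
    "sp_order d h x dvd N"
proof -
  let ?P = "\<lambda>n. n > 0 \<and> (\<lambda>v. int n * x v) \<in> Lambda d h"
  have ex: "?P N" using assms by simp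
  have P: "?P (sp_order d h x)" unfolding sp_order_def by (rule LeastI[of ?P, OF ex])
  then show "sp_order d h x > 0" "(\<lambda>v. int (sp_order d h x) * x v) \<in> Lambda d h" by auto
  let ?o = "sp_order d h x"
  have "(\<lambda>v. int (N mod ?o) * x v) \<in> Lambda d h"
  proof -
    have "(\<lambda>v. int (N div ?o) * (int ?o * x v)) \<in> Lambda d h" using P Lam_mult by blast
    then have "(\<lambda>v. int N * x v - int (N div ?o) * (int ?o * x v)) \<in> Lambda d h"
      using Lam_diff[OF assms(2)] by blast
    moreover have "\<And>v. int N * x v - int (N div ?o) * (int ?o * x v) = int (N mod ?o) * x v"
    proof -
      fix v
      have "int N = int (N div ?o) * int ?o + int (N mod ?o)"
        by (metis of_nat_add of_nat_mult div_mult_mod_eq)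
      then show "int N * x v - int (N div ?o) * (int ?o * x v) = int (N mod ?o) * x v"
        by (simp add: algebra_simps)
    qed
    ultimately show ?thesis by simp
  qed
  moreover have "N mod ?o < ?o" using P by simp
  ultimately show "sp_order d h x dvd N"
  proof (cases "N mod ?o > 0")
    case True
    assume m: "(\<lambda>v. int (N mod ?o) * x v) \<in> Lambda d h" "N mod ?o < ?o"
    have "?o \<le> N mod ?o" unfolding sp_order_def by (rule Least_le) (use True m in \<open>simp add: sp_order_def\<close>)
    with m show ?thesis by simp
  qed (simp add: dvd_eq_mod_eq_0)
qed

context trd begin

lemma green: assumes v: "v \<in> tree_verts d h"
  shows "(\<Sum>u\<in>tree_verts d h. G v u * of_int (tree_Delta d h u w)) = (if v = w then 1 else 0)"
proof (cases "w \<in> tree_verts d h")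
  case True
  show ?thesis unfolding nbr_sum[OF True] using green_local[OF v True] .
next
  case False
  then show ?thesis using nbr_sum_out[OF False] v by auto
qed

lemma G_int: assumes "v \<in> tree_verts d h" shows "of_nat NN * G v u \<in> \<int>"
proof -
  have "lcp v u \<le> h" using lcp_le[of v u] len_V[OF assms] by simp
  then have "of_nat NN * rho (lcp v u) \<in> \<int>" by (rule rho_int)
  moreover have "of_nat NN * G v u = T (length v) * T (length u) * (of_nat NN * rho (lcp v u))"
    unfolding G_def by (simp add: algebra_simps)
  moreover have "T (length v) \<in> \<int>" "T (length u) \<in> \<int>" unfolding T_nat by (rule Ints_of_nat)+
  ultimately show ?thesis by (metis Ints_mult)
qed

lemma NN_pos: "NN > 0"
proof -
  have "finite Sset" unfolding Sset_def by simp
  moreover have "0 \<notin> Sset"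
  proof
    assume "0 \<in> Sset"
    then consider "0 = d * thn (d - 1) (h + 1)" | a where "a \<in> {2..h}" "0 = thn (d - 1) a"
      unfolding Sset_def theta_eq by auto
    then show False
    proof cases
      case 1 then show False using thn_pos[of "d - 1" "h + 1"] d3 by simp
    next
      case 2
      have "d - 1 \<ge> 1" "a \<ge> 1" using d3 2 by auto
      then show False using thn_pos[of "d - 1" a] 2 by simp
    qed
  qed
  ultimately have "Lcm Sset \<noteq> 0" by simp
  then show ?thesis unfolding NN_def using d3 by simp
qed

lemma Lam_NN: assumes x: "x \<in> ZV d h" shows "(\<lambda>w. int NN * x w) \<in> Lambda d h"
proof -
  let ?V = "tree_verts d h"
  define C where "C v u = \<lfloor>of_nat NN * G v u\<rfloor>" for v u
  have C: "of_int (C v u) = of_nat NN * G v u" if vV: "v \<in> ?V" for v u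
  proof -
    obtain z where z: "of_nat NN * G v u = (of_int z :: rat)" using G_int[OF vV] by (auto elim: Ints_cases)
    then show ?thesis unfolding C_def by simp
  qed
  define c where "c u = (\<Sum>v\<in>?V. x v * C v u)" for u
  have "int NN * x w = (\<Sum>u\<in>?V. c u * tree_Delta d h u w)" for w
  proof -
    have "(of_int (\<Sum>u\<in>?V. c u * tree_Delta d h u w) :: rat) =
       (\<Sum>u\<in>?V. \<Sum>v\<in>?V. of_int (x v) * (of_int (C v u) * of_int (tree_Delta d h u w)))"
      unfolding c_def by (simp add: sum_distrib_right mult.assoc)
    also have "\<dots> = (\<Sum>v\<in>?V. \<Sum>u\<in>?V. of_int (x v) * (of_int (C v u) * of_int (tree_Delta d h u w)))"
      by (rule sum.swap)
    also have "\<dots> = (\<Sum>v\<in>?V. of_int (x v) * of_nat NN * (\<Sum>u\<in>?V. G v u * of_int (tree_Delta d h u w)))"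
      by (rule sum.cong) (auto simp: C sum_distrib_left mult.assoc)
    also have "\<dots> = (\<Sum>v\<in>?V. of_int (x v) * of_nat NN * (if v = w then 1 else 0))"
      by (rule sum.cong) (auto simp: green)
    also have "\<dots> = of_int (int NN * x w)"
      using x finite_V unfolding ZV_def by (auto simp: if_distrib[of "\<lambda>t. a * t" for a] sum.delta cong: if_cong)
    finally show ?thesis by (simp only: of_int_eq_iff)
  qed
  then show ?thesis unfolding Lambda_def by blast
qed

lemma pairing: assumes v: "v \<in> tree_verts d h" and v': "v' \<in> tree_verts d h"
  and c: "\<forall>w. int n * (if w = v then 1 else 0) = (\<Sum>u\<in>tree_verts d h. c u * tree_Delta d h u w)"
  shows "of_nat n * G v' v = of_int (c v')"
proof -
  let ?V = "tree_verts d h"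
  have "(\<Sum>w\<in>?V. of_int (int n * (if w = v then 1 else 0)) * G v' w) =
      (\<Sum>w\<in>?V. if w = v then of_nat n * G v' v else 0)"
    by (rule sum.cong) auto
  also have "\<dots> = of_nat n * G v' v" using v finite_V by simp
  finally have "of_nat n * G v' v = (\<Sum>w\<in>?V. of_int (int n * (if w = v then 1 else 0)) * G v' w)" by simp
  also have "\<dots> = (\<Sum>w\<in>?V. of_int (\<Sum>u\<in>?V. c u * tree_Delta d h u w) * G v' w)"
    using c by simp
  also have "\<dots> = (\<Sum>w\<in>?V. \<Sum>u\<in>?V. of_int (c u) * (G v' w * of_int (tree_Delta d h w u)))"
  proof (rule sum.cong[OF refl])
    fix w
    show "of_int (\<Sum>u\<in>?V. c u * tree_Delta d h u w) * G v' w =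
       (\<Sum>u\<in>?V. of_int (c u) * (G v' w * of_int (tree_Delta d h w u)))"
      unfolding of_int_sum of_int_mult sum_distrib_right
      by (rule sum.cong[OF refl]) (simp add: Delta_sym[of _ w] mult.commute mult.left_commute)
  qed
  also have "\<dots> = (\<Sum>u\<in>?V. \<Sum>w\<in>?V. of_int (c u) * (G v' w * of_int (tree_Delta d h w u)))"
    by (rule sum.swap)
  also have "\<dots> = (\<Sum>u\<in>?V. of_int (c u) * (if v' = u then 1 else 0))"
    by (rule sum.cong) (auto simp: sum_distrib_left[symmetric] green[OF v'])
  also have "\<dots> = (\<Sum>u\<in>?V. if u = v' then of_int (c v') else 0)"
    by (rule sum.cong) auto
  also have "\<dots> = of_int (c v')" using v' finite_V by simp
  finally show ?thesis .
qed

lemma leaf_in_V: assumes "k \<le> h" "b \<le> 1" shows "replicate k 0 @ replicate (h - k) (b::nat) \<in> tree_verts d h"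
  using assms d3 unfolding tree_verts_def by (auto simp: nth_append)

lemma main: "sp_exponent d h = NN"
proof -
  let ?V = "tree_verts d h"
  let ?E = "sp_exponent d h"
  have od: "sp_order d h x dvd NN" if "x \<in> ZV d h" for x
    using order_props(3)[OF NN_pos Lam_NN[OF that]] .
  have E1: "?E dvd NN" unfolding sp_exponent_def by (rule Lcm_least) (auto intro: od)
  define e :: "nat list \<Rightarrow> nat list \<Rightarrow> int" where "e v = (\<lambda>w. if w = v then 1 else 0)" for v
  have eZ: "e v \<in> ZV d h" if "v \<in> ?V" for v using that unfolding e_def ZV_def by auto
  have eL: "(\<lambda>w. int ?E * e v w) \<in> Lambda d h" if "v \<in> ?V" for v
  proof -
    have P: "(\<lambda>w. int (sp_order d h (e v)) * e v w) \<in> Lambda d h"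
      using order_props(2)[OF NN_pos Lam_NN[OF eZ[OF that]]] .
    have "sp_order d h (e v) dvd ?E" unfolding sp_exponent_def by (rule dvd_Lcm) (use eZ[OF that] in auto)
    then obtain t where t: "?E = sp_order d h (e v) * t" by auto
    have "(\<lambda>w. int t * (int (sp_order d h (e v)) * e v w)) \<in> Lambda d h" using Lam_mult[OF P] .
    then show ?thesis unfolding t by (simp add: algebra_simps)
  qed
  have "of_nat ?E * rho k \<in> \<int>" if k: "k \<le> h" for k
  proof -
    let ?x = "replicate k 0 @ replicate (h - k) (0::nat)"
    let ?y = "replicate k 0 @ replicate (h - k) (1::nat)"
    have xV: "?x \<in> ?V" by (rule leaf_in_V[OF k]) simp
    have yV: "?y \<in> ?V" by (rule leaf_in_V[OF k]) simp
    have "lcp (replicate (h - k) (0::nat)) (replicate (h - k) 1) = 0" by (cases "h - k") auto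
    then have l: "lcp ?x ?y = k" by (simp add: lcp_rep)
    have "T h = 1" unfolding T_def Th_def by simp
    then have Gxy: "G ?x ?y = rho k" unfolding G_def l using k by simp
    from eL[OF yV] obtain c where
      c: "\<forall>w. int ?E * e ?y w = (\<Sum>u\<in>?V. c u * tree_Delta d h u w)"
      unfolding Lambda_def by blast
    have "of_nat ?E * G ?x ?y = of_int (c ?x)"
      by (rule pairing[OF yV xV]) (use c in \<open>simp add: e_def\<close>)
    then show ?thesis using Gxy by simp
  qed
  then have "NN dvd ?E" by (rule NN_dvd)
  with E1 show ?thesis by (simp add: dvd_antisym)
qed

end

theorem theorem2p3:
  fixes d h :: nat
  assumes "d \<ge> 3" and "h \<ge> 1"
  shows "sp_exponent d h =
    (d - 1) ^ h * Lcm ({d * theta d (h + 1)} \<union> theta d ` {2..h})"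
proof -
  interpret trd d h using assms by unfold_locales
  show ?thesis using main unfolding NN_def Sset_def .
qed


end
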